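(* Let $n,m\ge0$ be integers, $d_1,\ldots,d_m,s$ positive integers, $g_\bullet=|n;d_1,\ldots,d_m|$ and $h_\bullet=|n;d_1,\ldots,d_m,s|$. Suppose $g_\bullet$ is unimodal at each tail. If there is a positive integer $i$ with $h_i\le h_{i-1}$, then $h_d\le h_{d-1}$ for all $d\ge i$; in this case, if $n\ge1$, then $h^{(1)}_\bullet=|n-1;d_1,\ldots,d_m,s|$.
   Context: For $P=\sum p_iz^i\in\mathbb{Z}[[z]]$ let $t=\min\{d:p_d\le0\}$ and $|P|=\sum q_iz^i$ with $q_i=p_i$ for $i<t$, $q_i=0$ for $i\ge t$. The Fröberg sequence $|n;d_1,\ldots,d_m|$ is the sequence $(h_0,h_1,\ldots)$ with $\sum h_iz^i=\left|\prod_{j=1}^m(1-z^{d_j})/(1-z)^n\right|$. For a sequence $h_\bullet$ of nonnegative integers with $h_0=1$: $h^{(0)}_\bullet=h_\bullet$; $h^{(i)}_0=1$ and $h^{(i)}_d=\max\{0,h^{(i-1)}_d-h^{(i-1)}_{d-1}\}$ for $d\ge1$ (in particular $h^{(1)}$ is given by this formula with $i=1$; in the definition of unimodality below it is used for $1\le i<h_1$). For $0\le i<\max\{1,h_1\}$, $r_i=\min\{d\ge1:h^{(i)}_d\le h^{(i)}_{d-1}\}$ ($\infty$ if none), $D(h_\bullet)=\min\{i:r_i<\infty\}$. The sequence is unimodal at each tail if for every $i$ with $D(h_\bullet)\le i<\max\{1,h_1\}$, $h^{(i)}_d\le h^{(i)}_{d-1}$ for all $d\ge r_i$. *)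

theory Defs
  imports "HOL-Computational_Algebra.Formal_Power_Series" "HOL-Library.Extended_Nat"
begin

text \<open>The power series prod_j (1 - z^(d_j)) / (1 - z)^n, computed in Q[[z]]
  (its coefficients are integers, since (1-z)^n is a unit of Z[[z]]).\<close>
definition froberg_series :: "nat \<Rightarrow> nat list \<Rightarrow> rat fps" where
  "froberg_series n ds = (\<Prod>d\<leftarrow>ds. 1 - fps_X ^ d) * inverse ((1 - fps_X) ^ n)"

text \<open>Truncation |P|: q_i = p_i for i < t, 0 otherwise, where t = min{d. p_d \<le> 0}
  (t = infinity if no such d).  Note i < t iff p_j > 0 for all j \<le> i.\<close>
definition trunc_seq :: "(nat \<Rightarrow> 'a::linordered_idom) \<Rightarrow> nat \<Rightarrow> 'a" where
  "trunc_seq p i = (if \<forall>j\<le>i. p j > 0 then p i else 0)"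

definition froberg :: "nat \<Rightarrow> nat list \<Rightarrow> nat \<Rightarrow> rat" where
  "froberg n ds = trunc_seq (\<lambda>i. fps_nth (froberg_series n ds) i)"

fun hder :: "(nat \<Rightarrow> 'a::linordered_idom) \<Rightarrow> nat \<Rightarrow> nat \<Rightarrow> 'a" where
  "hder h 0 = h"
| "hder h (Suc i) = (\<lambda>d. if d = 0 then 1 else max 0 (hder h i d - hder h i (d - 1)))"

definition rseq :: "(nat \<Rightarrow> 'a::linordered_idom) \<Rightarrow> nat \<Rightarrow> enat" where
  "rseq h i = (if \<exists>d\<ge>1. hder h i d \<le> hder h i (d - 1)
               then enat (LEAST d. d \<ge> 1 \<and> hder h i d \<le> hder h i (d - 1)) else \<infinity>)"

definition Dseq :: "(nat \<Rightarrow> 'a::linordered_idom) \<Rightarrow> enat" where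
  "Dseq h = (if \<exists>i. of_nat i < max 1 (h 1) \<and> rseq h i < \<infinity>
             then enat (LEAST i. of_nat i < max 1 (h 1) \<and> rseq h i < \<infinity>) else \<infinity>)"

definition unimodal_each_tail :: "(nat \<Rightarrow> 'a::linordered_idom) \<Rightarrow> bool" where
  "unimodal_each_tail h \<longleftrightarrow>
     (\<forall>i. Dseq h \<le> enat i \<and> of_nat i < max 1 (h 1) \<longrightarrow>
          (\<forall>d. rseq h i \<le> enat d \<longrightarrow> hder h i d \<le> hder h i (d - 1)))"

end

theory Submission
  imports Defs
begin

unbundle fps_syntax

lemma trunc_nonneg: "trunc_seq p k \<ge> (0::'a::linordered_idom)"
  unfolding trunc_seq_def by (auto simp: less_imp_le)

lemma trunc_eq: "(\<forall>j\<le>k. p j > 0) \<Longrightarrow> trunc_seq p k = p k"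
  unfolding trunc_seq_def by auto

lemma trunc_zero: "\<not>(\<forall>j\<le>k. p j > 0) \<Longrightarrow> trunc_seq p k = 0"
  unfolding trunc_seq_def by auto

lemma tail_mono:
  assumes U: "unimodal_each_tail h" and I: "of_nat i < max 1 (h 1)" and a: "1 \<le> a"
    and ha: "hder h i a \<le> hder h i (a-1)" and ab: "a \<le> b"
  shows "hder h i b \<le> hder h i (b-1)"
proof -
  have ex: "\<exists>d\<ge>1. hder h i d \<le> hder h i (d - 1)" using a ha by blast
  have L: "(LEAST d. d \<ge> 1 \<and> hder h i d \<le> hder h i (d - 1)) \<le> a"
    by (rule Least_le) (use a ha in auto)
  have r: "rseq h i = enat (LEAST d. d \<ge> 1 \<and> hder h i d \<le> hder h i (d - 1))"
    using ex unfolding rseq_def by simp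
  have ex2: "\<exists>i'. of_nat i' < max 1 (h 1) \<and> rseq h i' < \<infinity>"
    using I r by auto
  have "(LEAST i'. of_nat i' < max 1 (h 1) \<and> rseq h i' < \<infinity>) \<le> i"
    by (rule Least_le) (use I r in auto)
  then have D: "Dseq h \<le> enat i" using ex2 unfolding Dseq_def by simp
  have "rseq h i \<le> enat b" using r L ab by simp
  then show ?thesis using U D I unfolding unimodal_each_tail_def by blast
qed

lemma dec_chain:
  fixes f :: "nat \<Rightarrow> 'a::linorder"
  assumes "\<And>k. a < k \<Longrightarrow> k \<le> b \<Longrightarrow> f k \<le> f (k-1)" "a \<le> y" "y \<le> b"
  shows "f y \<le> f a"
  using assms(2,3)
proof (induction y)
  case 0 then show ?case by simp
next
  case (Suc y)
  show ?case
  proof (cases "a = Suc y")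
    case False
    then have "f (Suc y) \<le> f y" using assms(1)[of "Suc y"] Suc.prems by simp
    also have "\<dots> \<le> f a" using Suc False by simp
    finally show ?thesis .
  qed simp
qed

lemma inc_chain:
  fixes f :: "nat \<Rightarrow> 'a::linorder"
  assumes "\<And>k. a < k \<Longrightarrow> k \<le> b \<Longrightarrow> f (k-1) < f k" "a < y" "y \<le> b"
  shows "f a < f y"
  using assms(2,3)
proof (induction y)
  case 0 then show ?case by simp
next
  case (Suc y)
  have "f y < f (Suc y)" using assms(1)[of "Suc y"] Suc.prems by simp
  show ?case
  proof (cases "a = y")
    case False
    then have "f a < f y" using Suc by simp
    with \<open>f y < f (Suc y)\<close> show ?thesis by simp
  qed (use \<open>f y < f (Suc y)\<close> in simp)
qed

lemma inc_chain':
  fixes f :: "nat \<Rightarrow> 'a::linorder"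
  assumes "\<And>k. a < k \<Longrightarrow> k \<le> b \<Longrightarrow> f (k-1) < f k" "a \<le> y" "y \<le> b"
  shows "f a \<le> f y"
proof (cases "a = y")
  case False
  then have "f a < f y" using inc_chain[of a b f y] assms by simp
  then show ?thesis by simp
qed simp

lemma core:
  fixes G H :: "nat \<Rightarrow> rat"
  assumes s: "s > 0" and G0: "G 0 = 1"
    and HG: "\<And>k. H k = G k - (if s \<le> k then G (k-s) else 0)"
    and U: "unimodal_each_tail (trunc_seq G)"
    and i: "i > 0" and hi: "trunc_seq H i \<le> trunc_seq H (i-1)"
    and di: "i \<le> d"
  shows "trunc_seq H d \<le> trunc_seq H (d-1)"
proof (cases "\<forall>j\<le>d. H j > 0")
  case False
  then show ?thesis using trunc_zero[OF False] trunc_nonneg[of H "d-1"] by simp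
next
  case Hpos: True
  define g where "g = trunc_seq G"
  have Gpos: "\<forall>j\<le>d. G j > 0"
  proof (rule ccontr)
    assume "\<not> (\<forall>j\<le>d. G j > 0)"
    then have "\<exists>j. j \<le> d \<and> \<not> G j > 0" by auto
    then obtain j where j: "j \<le> d" "\<not> G j > 0" and mn: "\<forall>m<j. \<not> (m \<le> d \<and> \<not> G m > 0)"
      using exists_least_iff[of "\<lambda>j. j \<le> d \<and> \<not> G j > 0"] by blast
    have "H j > 0" using Hpos j by simp
    moreover have "H j \<le> 0"
    proof (cases "s \<le> j")
      case True
      have "G (j - s) > 0" using mn j s True by auto
      then show ?thesis using HG[of j] True j by simp
    next
      case False then show ?thesis using HG[of j] j by simp
    qed
    ultimately show False by simp
  qed
  have gG: "\<And>j. j \<le> d \<Longrightarrow> g j = G j" unfolding g_def using Gpos by (intro trunc_eq) auto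
  have hH: "\<And>j. j \<le> d \<Longrightarrow> trunc_seq H j = H j" using Hpos by (intro trunc_eq) auto
  have d1: "d \<ge> 1" using i di by simp
  have Hi: "H i \<le> H (i-1)" using hi hH[of i] hH[of "i-1"] di by simp
  define F where "F k = G k - (if k \<ge> 1 then G (k-1) else 0)" for k
  have F0: "F 0 = 1" using G0 by (simp add: F_def)
  have dH: "H k - H (k-1) = F k - (if s \<le> k then F (k-s) else 0)" if k: "k \<ge> 1" for k
  proof (cases "s \<le> k")
    case True
    then show ?thesis using k s by (cases "s = k") (auto simp: HG F_def)
  next
    case False
    then show ?thesis using k by (auto simp: HG F_def)
  qed
  have Fg: "F k = g k - g (k-1)" if "1 \<le> k" "k \<le> d" for k
    using that gG[of k] gG[of "k-1"] by (simp add: F_def)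
  have Mg: "g b \<le> g (b-1)" if "1 \<le> a" "a \<le> b" "g a \<le> g (a-1)" for a b
    using tail_mono[of g 0 a b] U that unfolding g_def by simp
  have goal: "F d \<le> (if s \<le> d then F (d-s) else 0)"
  proof (cases "F d \<le> 0")
    case Fd: True
    show ?thesis
    proof (cases "s \<le> d")
      case sd: True
      have "F (d-s) > 0"
      proof (rule ccontr)
        assume "\<not> F (d-s) > 0"
        then have ds1: "d - s \<ge> 1" using F0 by (cases "d - s = 0") auto
        have "g (d-s) \<le> g (d-s-1)" using Fg[of "d-s"] ds1 \<open>\<not> F (d-s) > 0\<close> by simp
        then have "\<And>k. d - s < k \<Longrightarrow> k \<le> d \<Longrightarrow> g k \<le> g (k-1)"
          using Mg ds1 by (meson less_imp_le)
        then have "g d \<le> g (d-s)" by (rule dec_chain) auto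
        then have "H d \<le> 0" using HG[of d] sd gG[of d] gG[of "d-s"] by simp
        then show False using Hpos by auto
      qed
      then show ?thesis using Fd sd by simp
    qed (use Fd in simp)
  next
    case Fd: False
    have Fpos: "F k > 0" if "1 \<le> k" "k \<le> d" for k
    proof (rule ccontr)
      assume "\<not> F k > 0"
      then have "g k \<le> g (k-1)" using Fg that by simp
      then have "g d \<le> g (d-1)" using Mg that by blast
      then show False using Fd Fg[of d] d1 by simp
    qed
    have Fi: "F i > 0" using Fpos i di by simp
    have Hi': "F i \<le> (if s \<le> i then F (i-s) else 0)" using Hi dH[of i] i by simp
    then have si: "s \<le> i" using Fi by (cases "s \<le> i") auto
    with Hi' have FiF: "F i \<le> F (i-s)" by simp
    define \<phi> where "\<phi> = hder g 1"
    have \<phi>F: "\<phi> k = F k" if "k \<le> d" for k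
    proof (cases "k = 0")
      case True then show ?thesis by (simp add: \<phi>_def F0)
    next
      case False
      then show ?thesis using Fpos[of k] Fg[of k] that by (simp add: \<phi>_def)
    qed
    have g1: "g 1 > 1" using Fpos[of 1] d1 gG[of 1] G0 by (simp add: F_def)
    have M\<phi>: "\<phi> b \<le> \<phi> (b-1)" if "1 \<le> a" "a \<le> b" "\<phi> a \<le> \<phi> (a-1)" for a b
      using tail_mono[of g 1 a b] U that g1 unfolding g_def \<phi>_def by simp
    have exa: "\<exists>a. 1 \<le> a \<and> a \<le> i \<and> \<phi> a \<le> \<phi> (a-1)"
    proof (rule ccontr)
      assume "\<not> ?thesis"
      then have "\<And>k. i - s < k \<Longrightarrow> k \<le> i \<Longrightarrow> \<phi> (k-1) < \<phi> k" by force
      then have "\<phi> (i-s) < \<phi> i" by (rule inc_chain) (use s i in auto)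
      then show False using FiF \<phi>F[of i] \<phi>F[of "i-s"] di by simp
    qed
    then obtain a where a: "1 \<le> a" "a \<le> i" "\<phi> a \<le> \<phi> (a-1)" by blast
    define r where "r = (LEAST a. 1 \<le> a \<and> \<phi> a \<le> \<phi> (a-1))"
    have r: "1 \<le> r" "\<phi> r \<le> \<phi> (r-1)" using LeastI[of "\<lambda>a. 1 \<le> a \<and> \<phi> a \<le> \<phi> (a-1)" a] a
      unfolding r_def by auto
    have ra: "r \<le> a" unfolding r_def by (rule Least_le) (use a in auto)
    have inc: "\<phi> (k-1) < \<phi> k" if "1 \<le> k" "k < r" for k
      using not_less_Least[of k "\<lambda>a. 1 \<le> a \<and> \<phi> a \<le> \<phi> (a-1)"] that unfolding r_def[symmetric]
      by auto
    have decr: "\<phi> k \<le> \<phi> (k-1)" if "r \<le> k" for k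
      using M\<phi>[of r k] r that by simp
    have "\<phi> d \<le> \<phi> (d-s)"
    proof (cases "r - 1 \<le> d - s")
      case True
      show ?thesis by (rule dec_chain[of "d-s" d]) (use True decr in auto)
    next
      case False
      have 1: "\<phi> (i-s) \<le> \<phi> (d-s)"
        by (rule inc_chain'[of "i-s" "d-s"]) (use False inc di in auto)
      have 2: "\<phi> d \<le> \<phi> i"
        by (rule dec_chain[of i d]) (use ra a decr di in auto)
      show ?thesis using 1 2 FiF \<phi>F[of i] \<phi>F[of "i-s"] di by simp
    qed
    then show ?thesis using \<phi>F[of d] \<phi>F[of "d-s"] si di by simp
  qed
  have "H d \<le> H (d-1)" using goal dH[of d] d1 by simp
  then show ?thesis using hH[of d] hH[of "d-1"] by simp
qed

lemma prodlist0: "(\<forall>d\<in>set ds. d > 0) \<Longrightarrow> (\<Prod>d\<leftarrow>ds. (1::rat fps) - fps_X ^ d) $ 0 = 1"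
  by (induction ds) auto

lemma fs0: "(\<forall>d\<in>set ds. d > 0) \<Longrightarrow> froberg_series n ds $ 0 = 1"
  by (simp add: froberg_series_def prodlist0 fps_power_zeroth)

lemma fs_app: "froberg_series n (ds @ [s]) = froberg_series n ds * (1 - fps_X ^ s)"
  by (simp add: froberg_series_def algebra_simps)

lemma fs_app_nth: "froberg_series n (ds @ [s]) $ k = froberg_series n ds $ k - (if s \<le> k then froberg_series n ds $ (k - s) else 0)"
  by (simp add: fs_app algebra_simps fps_X_power_mult_right_nth)

lemma fs_suc: "froberg_series n ds = (1 - fps_X) * froberg_series (Suc n) ds"
proof -
  have u: "(1 - fps_X :: rat fps) * inverse (1 - fps_X) = 1"
    by (rule inverse_mult_eq_1') simp
  have "inverse ((1 - fps_X :: rat fps) ^ Suc n) = inverse (1 - fps_X) * inverse ((1 - fps_X) ^ n)"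
    by (simp add: fps_inverse_mult)
  then show ?thesis unfolding froberg_series_def
    by (metis (no_types, lifting) ab_semigroup_mult_class.mult_ac(1) mult.left_commute mult.right_neutral u)
qed

lemma fs_suc_nth: "froberg_series n ds $ k = froberg_series (Suc n) ds $ k - (if k \<ge> 1 then froberg_series (Suc n) ds $ (k - 1) else 0)"
proof -
  have "froberg_series n ds $ k = (froberg_series (Suc n) ds - fps_X * froberg_series (Suc n) ds) $ k"
    by (simp add: fs_suc[of n ds] algebra_simps)
  then show ?thesis by (cases k) auto
qed

theorem lemma4p5:
  fixes n :: nat and ds :: "nat list" and s :: nat and i :: nat
  assumes "\<forall>d\<in>set ds. d > 0"
    and "s > 0"
    and "unimodal_each_tail (froberg n ds)"
    and "i > 0"
    and "froberg n (ds @ [s]) i \<le> froberg n (ds @ [s]) (i - 1)"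
  shows "(\<forall>d\<ge>i. froberg n (ds @ [s]) d \<le> froberg n (ds @ [s]) (d - 1))
       \<and> (n \<ge> 1 \<longrightarrow> hder (froberg n (ds @ [s])) 1 = froberg (n - 1) (ds @ [s]))"
proof -
  define G where "G k = froberg_series n ds $ k" for k
  define H where "H k = froberg_series n (ds @ [s]) $ k" for k
  have g: "froberg n ds = trunc_seq G" unfolding froberg_def G_def by simp
  have h: "froberg n (ds @ [s]) = trunc_seq H" unfolding froberg_def H_def by simp
  have G0: "G 0 = 1" unfolding G_def using assms(1) by (rule fs0)
  have HG: "\<And>k. H k = G k - (if s \<le> k then G (k-s) else 0)"
    unfolding H_def G_def by (rule fs_app_nth)
  have P1: "\<forall>d\<ge>j. trunc_seq H d \<le> trunc_seq H (d-1)"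
    if "j > 0" "trunc_seq H j \<le> trunc_seq H (j-1)" for j
    using core[OF assms(2) G0 HG] assms(3) that unfolding g by blast
  have A: "\<forall>d\<ge>i. froberg n (ds @ [s]) d \<le> froberg n (ds @ [s]) (d - 1)"
    using P1[of i] assms(4,5) unfolding h by blast
  have B: "hder (froberg n (ds @ [s])) 1 = froberg (n - 1) (ds @ [s])" if n1: "n \<ge> 1"
  proof -
    obtain m where m: "n = Suc m" using n1 by (cases n) auto
    define H' where "H' k = froberg_series m (ds @ [s]) $ k" for k
    have H'H: "\<And>k. H' k = H k - (if k \<ge> 1 then H (k-1) else 0)"
      unfolding H'_def H_def m by (rule fs_suc_nth)
    have H0: "H 0 = 1" unfolding H_def using assms(1,2) by (intro fs0) auto
    have h': "froberg (n - 1) (ds @ [s]) = trunc_seq H'" unfolding froberg_def H'_def m by simp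
    show ?thesis unfolding h h'
    proof
      fix k
      show "hder (trunc_seq H) 1 k = trunc_seq H' k"
      proof (cases "k = 0")
        case True
        then show ?thesis using H0 H'H[of 0] by (simp add: trunc_seq_def)
      next
        case k0: False
        show ?thesis
        proof (cases "\<forall>j\<le>k. H' j > 0")
          case True
          have Hp: "\<forall>j\<le>k. H j > 0"
          proof (intro allI impI)
            fix j assume "j \<le> k" then show "H j > 0"
            proof (induction j)
              case 0 then show ?case using H0 by simp
            next
              case (Suc j)
              then show ?case using True H'H[of "Suc j"] by force
            qed
          qed
          have "trunc_seq H k = H k" "trunc_seq H (k-1) = H (k-1)" using Hp by (auto intro: trunc_eq)
          moreover have "H' k = H k - H (k-1)" "H' k > 0" using H'H[of k] k0 True by auto
          ultimately show ?thesis using True k0 by (simp add: trunc_eq)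
        next
          case False
          then have "\<exists>j. j \<le> k \<and> \<not> H' j > 0" by auto
          then obtain j where j: "j \<le> k" "\<not> H' j > 0" and mn: "\<forall>q<j. \<not> (q \<le> k \<and> \<not> H' q > 0)"
            using exists_least_iff[of "\<lambda>j. j \<le> k \<and> \<not> H' j > 0"] by blast
          have j0: "j > 0" using j H'H[of 0] H0 by (cases j) auto
          have Hp: "\<forall>q\<le>j-1. H q > 0"
          proof (intro allI impI)
            fix q assume "q \<le> j - 1" then show "H q > 0"
            proof (induction q)
              case 0 then show ?case using H0 by simp
            next
              case (Suc q)
              then have "H' (Suc q) > 0" using mn j by auto
              then show ?case using Suc H'H[of "Suc q"] by force
            qed
          qed
          have hj1: "trunc_seq H (j-1) = H (j-1)" using Hp by (auto intro: trunc_eq)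
          have "H j \<le> H (j-1)" using j H'H[of j] j0 by simp
          then have "trunc_seq H j \<le> trunc_seq H (j-1)"
            using hj1 j0 Hp by (cases "\<forall>q\<le>j. H q > 0") (auto simp: trunc_seq_def)
          then have "trunc_seq H k \<le> trunc_seq H (k-1)" using P1[of j] j0 j by blast
          moreover have "trunc_seq H' k = 0" using False by (rule trunc_zero)
          ultimately show ?thesis using k0 by simp
        qed
      qed
    qed
  qed
  show ?thesis using A B by blast
qed

end
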